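(* Let $\mathbf{A}\in\mathbb{R}^{(\ell n)\times(qn)}$ be a block matrix with $\ell\times q$ blocks of size $n\times n$, with distinct nonzero blocks $\mathbf{A}_1,\dots,\mathbf{A}_p$. Suppose each $\mathbf{A}_k$ has upper bandwidth $u_k$ and lower bandwidth $\ell_k$, and set $b_u=\max_k u_k$, $b_\ell=\max_k \ell_k$. Let $r_2$ be the second entry of the multilinear rank of the tensor associated with $\mathbf{A}$. Then $$r_2\le n+\sum_{i=1}^{b_u}(n-i)+\sum_{j=1}^{b_\ell}(n-j).$$
   Context: Blocks: $\mathbf{A}^{(\gamma,\delta)}_{\alpha\beta}=\mathbf{A}_{(\gamma-1)n+\alpha,(\delta-1)n+\beta}$; $\eta_k$ is the number of block positions at which $\mathbf{A}_k$ occurs. A matrix $\mathbf{M}\in\mathbb{R}^{n\times n}$ has upper bandwidth $u$ and lower bandwidth $l$ if $u,l$ are the smallest nonnegative integers such that $\mathbf{M}_{ij}=0$ whenever $j-i>u$ or $i-j>l$. The associated tensor $\mathcal{A}\in\mathbb{R}^{n\times p\times n}$ has entries $\mathcal{A}_{ikj}=\sqrt{\eta_k}[\mathbf{A}_k]_{ij}$, and $r_2=\mathrm{rank}(\mathbf{A}_{(2)})$ where $\mathbf{A}_{(2)}\in\mathbb{R}^{p\times n^2}$ has $k$th row $\mathrm{vec}(\sqrt{\eta_k}\mathbf{A}_k)^\top$. *)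

theory Defs
  imports "Jordan_Normal_Form.DL_Rank"
begin

definition block :: "nat \<Rightarrow> real mat \<Rightarrow> nat \<Rightarrow> nat \<Rightarrow> real mat" where
  "block n A g d = mat n n (\<lambda>(a,b). A $$ (g*n + a, d*n + b))"

definition upper_bandwidth :: "real mat \<Rightarrow> nat" where
  "upper_bandwidth M = (LEAST u. \<forall>i<dim_row M. \<forall>j<dim_col M. j > i + u \<longrightarrow> M $$ (i,j) = 0)"

definition lower_bandwidth :: "real mat \<Rightarrow> nat" where
  "lower_bandwidth M = (LEAST l. \<forall>i<dim_row M. \<forall>j<dim_col M. i > j + l \<longrightarrow> M $$ (i,j) = 0)"

definition eta :: "nat \<Rightarrow> nat \<Rightarrow> nat \<Rightarrow> real mat \<Rightarrow> real mat \<Rightarrow> nat" where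
  "eta n l q A B = card {(g,d). g < l \<and> d < q \<and> block n A g d = B}"

text \<open>Mode-2 unfolding A_(2) (p x n^2): k-th row is vec(sqrt(eta_k) A_k), column-major vec.\<close>
definition unfold2 :: "nat \<Rightarrow> nat \<Rightarrow> nat \<Rightarrow> real mat \<Rightarrow> real mat list \<Rightarrow> real mat" where
  "unfold2 n l q A As = mat (length As) (n*n)
     (\<lambda>(k,c). sqrt (real (eta n l q A (As ! k))) * (As ! k) $$ (c mod n, c div n))"

end

theory Submission
  imports Defs
begin


lemma set_cols_eq: "M \<in> carrier_mat m nc \<Longrightarrow> set (cols M) = col M ` {..<nc}"
  by (simp add: cols_def lessThan_atLeast0)

lemma rank_le_support:
  fixes M :: "real mat"
  assumes M: "M \<in> carrier_mat m nc" and finJ: "finite J"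
    and z: "\<And>c. c < nc \<Longrightarrow> c \<notin> J \<Longrightarrow> col M c = 0\<^sub>v m"
  shows "vec_space.rank m M \<le> card J"
proof -
  have sc: "set (cols M) = col M ` {..<nc}" by (rule set_cols_eq[OF M])
  interpret vec_space "TYPE(real)" m .
  obtain S where S: "maximal S (\<lambda>T. T \<subseteq> set (cols M) \<and> lin_indpt T)"
    using maximal_exists[of "(\<lambda>T. T \<subseteq> set (cols M) \<and> lin_indpt T)" "card (set (cols M))" "{}"]
    by (meson List.finite_set card_mono empty_iff empty_subsetI finite_lin_indpt2 rev_finite_subset)
  have SS: "S \<subseteq> set (cols M)" and li: "lin_indpt S" using S by (auto simp: maximal_def)
  have cc: "set (cols M) \<subseteq> carrier_vec m" using cols_dim M by blast
  have U: "(UNIV::real set) \<noteq> {0}" by (metis UNIV_I one_neq_zero singletonD)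
  have "0\<^sub>v m \<notin> S" using U zero_nin_lin_indpt[OF _ li] SS cc class_semiring.one_zeroI by auto
  have "S \<subseteq> col M ` J"
  proof
    fix v assume v: "v \<in> S"
    then obtain c where c: "c < nc" "v = col M c" using SS sc by blast
    have "c \<in> J"
    proof (rule ccontr)
      assume "c \<notin> J"
      hence "v = 0\<^sub>v m" using z[OF c(1)] c(2) by simp
      thus False using v \<open>0\<^sub>v m \<notin> S\<close> by simp
    qed
    thus "v \<in> col M ` J" using c(2) by blast
  qed
  hence "card S \<le> card (col M ` J)" using finJ by (metis card_mono finite_imageI)
  also have "\<dots> \<le> card J" using card_image_le finJ by blast
  finally show ?thesis using rank_card_indpt[OF M S] by simp
qed

definition band :: "nat \<Rightarrow> nat \<Rightarrow> nat \<Rightarrow> (nat \<times> nat) set" where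
  "band n u l = {(i,j). i < n \<and> j < n \<and> j \<le> i + u \<and> i \<le> j + l}"

lemma finite_band: "finite (band n u l)"
  by (rule finite_subset[of _ "{..<n} \<times> {..<n}"]) (auto simp: band_def)

lemma band_u: "card (band n (Suc u) l) \<le> card (band n u l) + (n - Suc u)"
proof -
  have "band n (Suc u) l \<subseteq> band n u l \<union> (\<lambda>i. (i, i + Suc u)) ` {..<n - Suc u}"
  proof
    fix x assume x: "x \<in> band n (Suc u) l"
    obtain a b where ab: "x = (a,b)" by force
    show "x \<in> band n u l \<union> (\<lambda>i. (i, i + Suc u)) ` {..<n - Suc u}"
    proof (cases "b = a + Suc u")
      case True
      have "a < n - Suc u" using x ab True by (simp add: band_def less_diff_conv)
      hence "x \<in> (\<lambda>i. (i, i + Suc u)) ` {..<n - Suc u}" using ab True by (intro image_eqI[where x=a]) simp_all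
      thus ?thesis by (rule UnI2)
    next
      case False thus ?thesis using x ab by (simp add: band_def)
    qed
  qed
  hence "card (band n (Suc u) l) \<le> card (band n u l \<union> (\<lambda>i. (i, i + Suc u)) ` {..<n - Suc u})"
    by (intro card_mono) (auto simp: finite_band)
  also have "\<dots> \<le> card (band n u l) + card ((\<lambda>i. (i, i + Suc u)) ` {..<n - Suc u})"
    by (rule card_Un_le)
  also have "card ((\<lambda>i. (i, i + Suc u)) ` {..<n - Suc u}) \<le> n - Suc u"
    using card_image_le[of "{..<n - Suc u}"] by simp
  finally show ?thesis by simp
qed

lemma band_l: "card (band n 0 (Suc l)) \<le> card (band n 0 l) + (n - Suc l)"
proof -
  have "band n 0 (Suc l) \<subseteq> band n 0 l \<union> (\<lambda>j. (j + Suc l, j)) ` {..<n - Suc l}"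
  proof
    fix x assume x: "x \<in> band n 0 (Suc l)"
    obtain a b where ab: "x = (a,b)" by force
    show "x \<in> band n 0 l \<union> (\<lambda>j. (j + Suc l, j)) ` {..<n - Suc l}"
    proof (cases "a = b + Suc l")
      case True
      have "b < n - Suc l" using x ab True by (simp add: band_def less_diff_conv)
      hence "x \<in> (\<lambda>j. (j + Suc l, j)) ` {..<n - Suc l}" using ab True by (intro image_eqI[where x=b]) simp_all
      thus ?thesis by (rule UnI2)
    next
      case False thus ?thesis using x ab by (simp add: band_def)
    qed
  qed
  hence "card (band n 0 (Suc l)) \<le> card (band n 0 l \<union> (\<lambda>j. (j + Suc l, j)) ` {..<n - Suc l})"
    by (intro card_mono) (auto simp: finite_band)
  also have "\<dots> \<le> card (band n 0 l) + card ((\<lambda>j. (j + Suc l, j)) ` {..<n - Suc l})"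
    by (rule card_Un_le)
  also have "card ((\<lambda>j. (j + Suc l, j)) ` {..<n - Suc l}) \<le> n - Suc l"
    using card_image_le[of "{..<n - Suc l}"] by simp
  finally show ?thesis by simp
qed

lemma band_0: "card (band n 0 0) \<le> n"
proof -
  have "band n 0 0 = (\<lambda>i. (i,i)) ` {..<n}" unfolding band_def by auto
  thus ?thesis using card_image_le[of "{..<n}"] by simp
qed

lemma band_l_card: "card (band n 0 l) \<le> n + (\<Sum>j=1..l. n - j)"
proof (induction l)
  case 0 then show ?case using band_0 by simp
next
  case (Suc l) then show ?case using band_l[of n l] by simp
qed

lemma band_card: "card (band n u l) \<le> n + (\<Sum>i=1..u. n - i) + (\<Sum>j=1..l. n - j)"
proof (induction u)
  case 0 then show ?case using band_l_card[of n l] by simp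
next
  case (Suc u) then show ?case using band_u[of n u l] by simp
qed


lemma bw_props:
  fixes B :: "real mat"
  assumes B: "B \<in> carrier_mat n n"
  shows "\<forall>i<n. \<forall>j<n. j > i + upper_bandwidth B \<longrightarrow> B $$ (i,j) = 0"
    and "\<forall>i<n. \<forall>j<n. i > j + lower_bandwidth B \<longrightarrow> B $$ (i,j) = 0"
proof -
  have "\<forall>i<dim_row B. \<forall>j<dim_col B. j > i + n \<longrightarrow> B $$ (i,j) = 0" using B by auto
  from LeastI[of "\<lambda>u. \<forall>i<dim_row B. \<forall>j<dim_col B. j > i + u \<longrightarrow> B $$ (i,j) = 0" n, OF this] show "\<forall>i<n. \<forall>j<n. j > i + upper_bandwidth B \<longrightarrow> B $$ (i,j) = 0"
    using B unfolding upper_bandwidth_def by auto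
  have "\<forall>i<dim_row B. \<forall>j<dim_col B. i > j + n \<longrightarrow> B $$ (i,j) = 0" using B by auto
  from LeastI[of "\<lambda>u. \<forall>i<dim_row B. \<forall>j<dim_col B. i > j + u \<longrightarrow> B $$ (i,j) = 0" n, OF this] show "\<forall>i<n. \<forall>j<n. i > j + lower_bandwidth B \<longrightarrow> B $$ (i,j) = 0"
    using B unfolding lower_bandwidth_def by auto
qed

theorem corollary2:
  fixes n l q :: nat and A :: "real mat" and As :: "real mat list"
  assumes "A \<in> carrier_mat (l*n) (q*n)"
    and "distinct As"
    and "set As = {B. \<exists>g<l. \<exists>d<q. B = block n A g d \<and> B \<noteq> 0\<^sub>m n n}"
  shows "vec_space.rank (length As) (unfold2 n l q A As)
     \<le> n + (\<Sum>i=1..Max (upper_bandwidth ` set As). n - i)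
         + (\<Sum>j=1..Max (lower_bandwidth ` set As). n - j)"
proof -
  define bu where "bu = Max (upper_bandwidth ` set As)"
  define bl where "bl = Max (lower_bandwidth ` set As)"
  define M where "M = unfold2 n l q A As"
  define J where "J = {c. c < n*n \<and> (c mod n, c div n) \<in> band n bu bl}"
  have Bc: "B \<in> carrier_mat n n" if "B \<in> set As" for B
    using that assms(3) by (auto simp: block_def)
  have M: "M \<in> carrier_mat (length As) (n*n)" unfolding M_def unfold2_def by simp
  have finJ: "finite J" unfolding J_def by simp
  have zero: "col M c = 0\<^sub>v (length As)" if c: "c < n*n" "c \<notin> J" for c
  proof (rule eq_vecI)
    show "dim_vec (col M c) = dim_vec (0\<^sub>v (length As))" using M by simp
    fix k assume k: "k < dim_vec (0\<^sub>v (length As))"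
    hence k': "k < length As" by simp
    define B where "B = As ! k"
    have Bs: "B \<in> set As" using k' B_def by simp
    have Bc': "B \<in> carrier_mat n n" using Bc[OF Bs] .
    have np: "n > 0" using c by (cases n) auto
    have i: "c mod n < n" using np by simp
    have j: "c div n < n" using c by (simp add: less_mult_imp_div_less)
    have ub: "upper_bandwidth B \<le> bu" unfolding bu_def using Bs by (intro Max_ge) auto
    have lb: "lower_bandwidth B \<le> bl" unfolding bl_def using Bs by (intro Max_ge) auto
    have "\<not> (c div n \<le> c mod n + bu \<and> c mod n \<le> c div n + bl)"
      using c i j unfolding J_def band_def by auto
    hence "B $$ (c mod n, c div n) = 0"
      using bw_props[OF Bc'] i j ub lb by (metis add_le_mono1 add_le_mono le_trans not_le nat_add_left_cancel_le)
    thus "col M c $ k = 0\<^sub>v (length As) $ k"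
      using M k' c unfolding M_def unfold2_def B_def by simp
  qed
  have "vec_space.rank (length As) M \<le> card J" by (rule rank_le_support[OF M finJ zero])
  also have "card J \<le> card (band n bu bl)"
  proof (rule card_inj_on_le[where f="\<lambda>c. (c mod n, c div n)"])
    show "inj_on (\<lambda>c. (c mod n, c div n)) J"
      by (intro inj_onI) (metis div_mult_mod_eq prod.inject)
    show "(\<lambda>c. (c mod n, c div n)) ` J \<subseteq> band n bu bl" unfolding J_def by auto
    show "finite (band n bu bl)" by (rule finite_band)
  qed
  also have "\<dots> \<le> n + (\<Sum>i=1..bu. n - i) + (\<Sum>j=1..bl. n - j)" by (rule band_card)
  finally show ?thesis unfolding M_def bu_def bl_def .
qed

end
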